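(* Let $a,b,c>0$ and let $F(x)=F(a,b;c;x)$ for $|x|<1$. Then: (1) If $ab/(a+b+1)<c$, then $\log F(x)$ is convex on $(0,1)$. In particular, $F((x+y)/2)\le\sqrt{F(x)F(y)}$ for all $x,y\in(0,1)$, with equality if and only if $x=y$. (2) If $(a-c)(b-c)>0$, then $t\mapsto\log F(1-e^{-t})$ is concave on $(0,\infty)$. In particular, $\sqrt{F(x)F(y)}\le F\big(1-\sqrt{(1-x)(1-y)}\big)$ for all $x,y\in(0,1)$, with equality if and only if $x=y$. (3) If $a+b\ge c$, then $t\mapsto F(1-e^{-t})$ is convex on $(0,\infty)$. In particular, $F\big(1-\sqrt{(1-x)(1-y)}\big)\le (F(x)+F(y))/2$ for all $x,y\in(0,1)$, with equality if and only if $x=y$.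
   Context: $F(a,b;c;x)={}_2F_1(a,b;c;x)=\sum_{n=0}^\infty\frac{(a,n)(b,n)}{(c,n)\,n!}x^n$ for $|x|<1$ is the Gaussian hypergeometric function, where $(a,0)=1$ and $(a,n)=a(a+1)\cdots(a+n-1)$ for $n\ge1$. *)

theory Defs
  imports "HOL-Analysis.Analysis"
begin

definition hyp2F1 :: "real \<Rightarrow> real \<Rightarrow> real \<Rightarrow> real \<Rightarrow> real" where
  "hyp2F1 a b c x = (\<Sum>n. pochhammer a n * pochhammer b n / (pochhammer c n * fact n) * x ^ n)"

end

theory Submission
  imports Defs "HOL-Real_Asymp.Real_Asymp"
begin


definition hA :: "real \<Rightarrow> real \<Rightarrow> real \<Rightarrow> nat \<Rightarrow> real" where
  "hA a b c n = pochhammer a n * pochhammer b n / (pochhammer c n * fact n)"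

definition hF1 :: "real \<Rightarrow> real \<Rightarrow> real \<Rightarrow> real \<Rightarrow> real" where
  "hF1 a b c x = (\<Sum>n. diffs (hA a b c) n * x ^ n)"

definition hF2 :: "real \<Rightarrow> real \<Rightarrow> real \<Rightarrow> real \<Rightarrow> real" where
  "hF2 a b c x = (\<Sum>n. diffs (diffs (hA a b c)) n * x ^ n)"

lemma hyp2F1_alt: "hyp2F1 a b c x = (\<Sum>n. hA a b c n * x ^ n)"
  unfolding hyp2F1_def hA_def ..

lemma first_zero:
  fixes \<phi> :: "real \<Rightarrow> real"
  assumes cont: "continuous_on {0<..<1} \<phi>"
    and start: "\<exists>\<delta>>0. \<forall>y. 0 < y \<and> y < \<delta> \<longrightarrow> \<phi> y > 0"
    and zero: "\<And>y. 0 < y \<Longrightarrow> y < 1 \<Longrightarrow> \<phi> y = 0 \<Longrightarrow> \<exists>l>0. (\<phi> has_real_derivative l) (at y)"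
    and x: "0 < x" "x < 1"
  shows "\<phi> x > 0"
proof (rule ccontr)
  assume "\<not> \<phi> x > 0"
  hence x1: "\<phi> x \<le> 0" by simp
  obtain \<delta> where \<delta>: "\<delta> > 0" "\<forall>y. 0 < y \<and> y < \<delta> \<longrightarrow> \<phi> y > 0" using start by blast
  define d where "d = min \<delta> x / 2"
  have d: "0 < d" "d < x" "d < \<delta>" using \<delta> x by (auto simp: d_def)
  have \<phi>d: "\<phi> d > 0" using \<delta> d by auto
  define S where "S = {y \<in> {d..x}. \<phi> y \<le> 0}"
  have contS: "continuous_on {d..x} \<phi>"
    by (rule continuous_on_subset[OF cont]) (use d x in auto)
  have "closed S" unfolding S_def
    by (rule continuous_on_closed_Collect_le[OF contS continuous_on_const]) simp
  have "x \<in> S" using x1 d by (auto simp: S_def)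
  have bdd: "bdd_below S" unfolding S_def by (rule bdd_belowI[of _ d]) auto
  define x0 where "x0 = Inf S"
  have "x0 \<in> S" unfolding x0_def using closed_contains_Inf[OF _ bdd \<open>closed S\<close>] \<open>x \<in> S\<close> by blast
  hence x0: "d \<le> x0" "x0 \<le> x" "\<phi> x0 \<le> 0" by (auto simp: S_def)
  have below: "\<phi> y > 0" if "d \<le> y" "y < x0" for y
  proof (rule ccontr)
    assume "\<not> \<phi> y > 0"
    hence "y \<in> S" using that x0 by (auto simp: S_def)
    hence "x0 \<le> y" unfolding x0_def using bdd by (rule cInf_lower)
    thus False using that by simp
  qed
  have dx0: "d < x0" using \<phi>d x0 by (cases "d = x0") auto
  have "\<phi> x0 = 0"
  proof (rule ccontr)
    assume "\<phi> x0 \<noteq> 0"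
    hence neg: "\<phi> x0 < 0" using x0 by simp
    have "continuous_on {d..x0} \<phi>" using contS by (rule continuous_on_subset) (use x0 in auto)
    from IVT2'[of \<phi> x0 0 d, OF _ _ _ this] obtain z where z: "d \<le> z" "z \<le> x0" "\<phi> z = 0"
      using neg \<phi>d dx0 by auto
    have "z \<noteq> x0" using z neg by auto
    hence "z < x0" using z by simp
    from below[OF z(1) this] have "\<phi> z > 0" .
    thus False using z by simp
  qed
  then obtain l where l: "l > 0" "(\<phi> has_real_derivative l) (at x0)" using zero[of x0] d x0 x by auto
  from DERIV_pos_inc_left[OF l(2) l(1)] obtain e where e: "e > 0" "\<forall>h>0. h < e \<longrightarrow> \<phi> (x0 - h) < \<phi> x0"
    by blast
  define h where "h = min e (x0 - d) / 2"
  have "min e (x0 - d) \<le> x0 - d" "min e (x0 - d) \<le> e" "min e (x0 - d) > 0" using e dx0 by auto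
  hence h: "h > 0" "h < e" "d \<le> x0 - h" "x0 - h < x0" unfolding h_def min_def by (auto split: if_splits)
  have "\<phi> (x0 - h) < 0" using e h \<open>\<phi> x0 = 0\<close> by auto
  moreover have "\<phi> (x0 - h) > 0" using below h by auto
  ultimately show False by simp
qed


lemma convex_pkg:
  fixes f f' f'' :: "real \<Rightarrow> real" and I :: "real set"
  assumes I: "connected I"
    and d1: "\<And>x. x \<in> I \<Longrightarrow> (f has_real_derivative f' x) (at x)"
    and d2: "\<And>x. x \<in> I \<Longrightarrow> (f' has_real_derivative f'' x) (at x)"
    and pos: "\<And>x. x \<in> I \<Longrightarrow> f'' x > 0"
  shows "convex_on I f \<and> (\<forall>x\<in>I. \<forall>y\<in>I. x \<noteq> y \<longrightarrow> 2 * f ((x + y) / 2) < f x + f y)"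
proof -
  have btw: "z \<in> I" if "x \<in> I" "y \<in> I" "x \<le> z" "z \<le> y" for x y z
    using connectedD_interval[OF I that] .
  have mono: "f' x < f' y" if "x \<in> I" "y \<in> I" "x < y" for x y
  proof (rule DERIV_pos_imp_increasing[OF \<open>x < y\<close>])
    fix t assume "x \<le> t" "t \<le> y"
    then have "t \<in> I" using btw[OF that(1) that(2)] by simp
    then show "\<exists>l. DERIV f' t :> l \<and> l > 0" using d2 pos by blast
  qed
  have cvx: "convex_on I f"
  proof (rule convex_on_realI[OF I d1])
    fix x y assume xy: "x \<in> I" "y \<in> I" "x \<le> y"
    show "f' x \<le> f' y"
    proof (cases "x = y")
      case False
      then have "x < y" using xy by simp
      then show ?thesis using mono[OF xy(1,2)] by simp
    qed simp
  qed
  have mid: "2 * f ((x + y) / 2) < f x + f y" if "x \<in> I" "y \<in> I" "x < y" for x y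
  proof -
    define m where "m = (x + y) / 2"
    have m: "x < m" "m < y" using that by (auto simp: m_def)
    have mI: "m \<in> I" by (rule btw[OF that(1) that(2)]) (use m in linarith)+
    have "DERIV f t :> f' t" if "x \<le> t" "t \<le> m" for t
      using d1 btw[OF \<open>x \<in> I\<close> mI that] by simp
    from MVT2[OF m(1) this] obtain z1 where z1: "x < z1" "z1 < m" "f m - f x = (m - x) * f' z1"
      by blast
    have "DERIV f t :> f' t" if "m \<le> t" "t \<le> y" for t
      using d1 btw[OF mI \<open>y \<in> I\<close> that] by simp
    from MVT2[OF m(2) this] obtain z2 where z2: "m < z2" "z2 < y" "f y - f m = (y - m) * f' z2"
      by blast
    have z1I: "z1 \<in> I" by (rule btw[OF that(1) that(2)]) (use z1 m in linarith)+
    have z2I: "z2 \<in> I" by (rule btw[OF that(1) that(2)]) (use z2 m in linarith)+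
    have fz: "f' z1 < f' z2" by (rule mono[OF z1I z2I]) (use z1 z2 in linarith)
    have m2: "2 * m = x + y" by (simp add: m_def)
    have e: "m - x = y - m" and p: "m - x > 0" using m m2 by linarith+
    have "(m - x) * f' z1 < (m - x) * f' z2" using fz p by (intro mult_strict_left_mono)
    hence "f m - f x < f y - f m" using z1(3) z2(3) e by simp
    thus ?thesis unfolding m_def by simp
  qed
  show ?thesis
  proof (intro conjI cvx ballI impI)
    fix x y assume "x \<in> I" "y \<in> I" "x \<noteq> y"
    then show "2 * f ((x + y) / 2) < f x + f y"
    proof (cases "x < y")
      case True
      then show ?thesis using mid[of x y] \<open>x \<in> I\<close> \<open>y \<in> I\<close> by simp
    next
      case False
      then have "y < x" using \<open>x \<noteq> y\<close> by simp
      then have "2 * f ((y + x) / 2) < f y + f x" using mid[of y x] \<open>x \<in> I\<close> \<open>y \<in> I\<close> by simp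
      then show ?thesis by (simp add: add.commute)
    qed
  qed
qed


context
  fixes a b c :: real
  assumes a: "a > 0" and b: "b > 0" and c: "c > 0"
begin

lemma hA_pos: "hA a b c n > 0"
  unfolding hA_def using a b c by (intro divide_pos_pos mult_pos_pos pochhammer_pos) auto

lemma hA_Suc: "hA a b c (Suc n) = hA a b c n * (a + n) * (b + n) / ((c + n) * (n + 1))"
proof -
  have "pochhammer c n > 0" using c pochhammer_pos by blast
  then show ?thesis
    unfolding hA_def by (simp add: pochhammer_Suc field_simps)
qed

lemma hA_0: "hA a b c 0 = 1" by (simp add: hA_def)
lemma hA_1: "hA a b c 1 = a * b / c" by (simp add: hA_def)
lemma hA_2: "hA a b c 2 = a * (a+1) * b * (b+1) / (2 * c * (c+1))"
  by (simp add: hA_def pochhammer_Suc numeral_2_eq_2 field_simps)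

lemma conv_radius_hA: "conv_radius (hA a b c) = 1"
proof (rule conv_radius_ratio_limit_nonzero[of _ 1])
  have "(\<lambda>n. (c + real n) * (real n + 1) / ((a + real n) * (b + real n))) \<longlonglongrightarrow> 1"
    by real_asymp
  moreover have "norm (hA a b c n) / norm (hA a b c (Suc n)) = (c + real n) * (real n + 1) / ((a + real n) * (b + real n))" for n
  proof -
    have p: "hA a b c n > 0" "a + real n > 0" "b + real n > 0" "c + real n > 0" using hA_pos[of n] a b c by auto
    define q where "q = (a + real n) * (b + real n) / ((c + real n) * (real n + 1))"
    have q: "q > 0" using p unfolding q_def by auto
    have e: "hA a b c (Suc n) = hA a b c n * q" unfolding q_def hA_Suc by (simp add: algebra_simps)
    have "norm (hA a b c n) / norm (hA a b c (Suc n)) = 1 / q"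
      unfolding e using p q by (simp add: abs_of_pos)
    also have "\<dots> = (c + real n) * (real n + 1) / ((a + real n) * (b + real n))"
      unfolding q_def by simp
    finally show ?thesis .
  qed
  ultimately show "(\<lambda>n. norm (hA a b c n) / norm (hA a b c (Suc n))) \<longlonglongrightarrow> 1" by simp
qed auto

lemma summable_hA: "\<bar>x\<bar> < 1 \<Longrightarrow> summable (\<lambda>n. hA a b c n * x ^ n)"
  by (rule summable_in_conv_radius) (simp add: conv_radius_hA)

lemma summable_hA1: "\<bar>x\<bar> < 1 \<Longrightarrow> summable (\<lambda>n. diffs (hA a b c) n * x ^ n)"
  by (rule termdiff_converges[of x 1]) (auto intro: summable_hA)

lemma summable_hA2: "\<bar>x\<bar> < 1 \<Longrightarrow> summable (\<lambda>n. diffs (diffs (hA a b c)) n * x ^ n)"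
  by (rule termdiff_converges[of x 1]) (auto intro: summable_hA1)

lemma dF: "\<bar>x\<bar> < 1 \<Longrightarrow> (hyp2F1 a b c has_real_derivative hF1 a b c x) (at x)"
  unfolding hyp2F1_alt[abs_def] hF1_def
  by (rule termdiffs_strong'[of 1]) (auto intro: summable_hA)

lemma dF1: "\<bar>x\<bar> < 1 \<Longrightarrow> (hF1 a b c has_real_derivative hF2 a b c x) (at x)"
  unfolding hF1_def[abs_def] hF2_def
  by (rule termdiffs_strong'[of 1]) (auto intro: summable_hA1)

lemma F_0: "hyp2F1 a b c 0 = 1"
  unfolding hyp2F1_alt using powser_zero[of "hA a b c"] by (simp add: hA_0)

lemma F1_0: "hF1 a b c 0 = a * b / c"
  unfolding hF1_def using powser_zero[of "diffs (hA a b c)"] by (simp add: diffs_def hA_def)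

lemma F2_0: "hF2 a b c 0 = a * (a+1) * b * (b+1) / (c * (c+1))"
  unfolding hF2_def using powser_zero[of "diffs (diffs (hA a b c))"]
  by (simp add: diffs_def hA_2 numeral_2_eq_2[symmetric])

lemma F_pos: "0 \<le> x \<Longrightarrow> x < 1 \<Longrightarrow> hyp2F1 a b c x > 0"
proof (cases "x = 0")
  case True then show ?thesis by (simp add: F_0)
next
  case False
  assume "0 \<le> x" "x < 1"
  then show ?thesis unfolding hyp2F1_alt using False
    by (intro suminf_pos summable_hA) (auto intro!: mult_pos_pos hA_pos)
qed

lemma F1_pos: "0 \<le> x \<Longrightarrow> x < 1 \<Longrightarrow> hF1 a b c x > 0"
proof (cases "x = 0")
  case True then show ?thesis using a b c by (simp add: F1_0)
next
  case False
  assume "0 \<le> x" "x < 1"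
  then show ?thesis unfolding hF1_def using False
    by (intro suminf_pos summable_hA1) (auto intro!: mult_pos_pos hA_pos simp: diffs_def)
qed

lemma shift_sums:
  fixes f :: "nat \<Rightarrow> real"
  assumes "(\<lambda>n. f n * x ^ n) sums S"
  shows "(\<lambda>n. (case n of 0 \<Rightarrow> 0 | Suc m \<Rightarrow> f m) * x ^ n) sums (x * S)"
proof -
  have "(\<lambda>n. x * (f n * x ^ n)) sums (x * S)" by (rule sums_mult[OF assms])
  then have "(\<lambda>n. (case Suc n of 0 \<Rightarrow> 0 | Suc m \<Rightarrow> f m) * x ^ Suc n) sums (x * S)"
    by (simp add: algebra_simps)
  then have "(\<lambda>n. (case n of 0 \<Rightarrow> 0 | Suc m \<Rightarrow> f m) * x ^ n) sums (x * S + (case 0 of 0 \<Rightarrow> 0 | Suc m \<Rightarrow> f m) * x ^ 0)"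
    by (rule sums_Suc)
  then show ?thesis by simp
qed

lemma ode: 
  assumes x: "\<bar>x\<bar> < 1"
  shows "x * (1 - x) * hF2 a b c x + (c - (a + b + 1) * x) * hF1 a b c x - a * b * hyp2F1 a b c x = 0"
proof -
  define A where "A = hA a b c"
  have s0: "(\<lambda>n. A n * x ^ n) sums hyp2F1 a b c x"
    unfolding A_def hyp2F1_alt using summable_hA[OF x] by (rule summable_sums)
  have s1: "(\<lambda>n. diffs A n * x ^ n) sums hF1 a b c x"
    unfolding A_def hF1_def using summable_hA1[OF x] by (rule summable_sums)
  have s2: "(\<lambda>n. diffs (diffs A) n * x ^ n) sums hF2 a b c x"
    unfolding A_def hF2_def using summable_hA2[OF x] by (rule summable_sums)
  have s1x: "(\<lambda>n. (real n * A n) * x ^ n) sums (x * hF1 a b c x)"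
  proof -
    have "(\<lambda>n. (case n of 0 \<Rightarrow> 0 | Suc m \<Rightarrow> diffs A m) * x ^ n) sums (x * hF1 a b c x)"
      by (rule shift_sums[OF s1])
    moreover have "(case n of 0 \<Rightarrow> 0 | Suc m \<Rightarrow> diffs A m) = real n * A n" for n
      by (cases n) (auto simp: diffs_def)
    ultimately show ?thesis by simp
  qed
  have s2x: "(\<lambda>n. (real (Suc n) * real n * A (Suc n)) * x ^ n) sums (x * hF2 a b c x)"
  proof -
    have "(\<lambda>n. (case n of 0 \<Rightarrow> 0 | Suc m \<Rightarrow> diffs (diffs A) m) * x ^ n) sums (x * hF2 a b c x)"
      by (rule shift_sums[OF s2])
    moreover have "(case n of 0 \<Rightarrow> 0 | Suc m \<Rightarrow> diffs (diffs A) m) = real (Suc n) * real n * A (Suc n)" for n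
      by (cases n) (auto simp: diffs_def)
    ultimately show ?thesis by simp
  qed
  have s2xx: "(\<lambda>n. (real n * (real n - 1) * A n) * x ^ n) sums (x * (x * hF2 a b c x))"
  proof -
    have "(\<lambda>n. (case n of 0 \<Rightarrow> 0 | Suc m \<Rightarrow> real (Suc m) * real m * A (Suc m)) * x ^ n) sums (x * (x * hF2 a b c x))"
      by (rule shift_sums[OF s2x])
    moreover have "(case n of 0 \<Rightarrow> 0 | Suc m \<Rightarrow> real (Suc m) * real m * A (Suc m)) = real n * (real n - 1) * A n" for n
      by (cases n) (auto simp: algebra_simps)
    ultimately show ?thesis by simp
  qed
  have comb: "(\<lambda>n. (real (Suc n) * real n * A (Suc n)) * x ^ n - (real n * (real n - 1) * A n) * x ^ n
      + c * (diffs A n * x ^ n) - (a + b + 1) * ((real n * A n) * x ^ n) - a * b * (A n * x ^ n))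
     sums (x * hF2 a b c x - x * (x * hF2 a b c x) + c * hF1 a b c x - (a + b + 1) * (x * hF1 a b c x) - a * b * hyp2F1 a b c x)"
    by (intro sums_diff sums_add sums_mult s0 s1 s2x s2xx s1x)
  have zero: "(real (Suc n) * real n * A (Suc n)) * x ^ n - (real n * (real n - 1) * A n) * x ^ n
      + c * (diffs A n * x ^ n) - (a + b + 1) * ((real n * A n) * x ^ n) - a * b * (A n * x ^ n) = 0" for n
  proof -
    have cn: "c + real n > 0" using c by simp
    have key: "A (Suc n) * ((c + real n) * (real n + 1)) = A n * (a + n) * (b + n)"
    proof -
      have nz: "(c + real n) * (real n + 1) \<noteq> 0" using cn by (simp add: add_pos_nonneg)
      have "A (Suc n) = A n * (a + n) * (b + n) / ((c + real n) * (real n + 1))"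
        unfolding A_def hA_Suc by (simp only: of_nat_add of_nat_1)
      then show ?thesis by (rule nonzero_eq_divide_eq[OF nz, THEN iffD1])
    qed
    have "(real (Suc n) * real n * A (Suc n)) * x ^ n - (real n * (real n - 1) * A n) * x ^ n
      + c * (diffs A n * x ^ n) - (a + b + 1) * ((real n * A n) * x ^ n) - a * b * (A n * x ^ n)
      = x ^ n * (A (Suc n) * ((c + real n) * (real n + 1)) - A n * (a + n) * (b + n))"
      by (simp add: diffs_def algebra_simps)
    then show ?thesis unfolding key by simp
  qed
  from comb have "(\<lambda>n. 0) sums (x * hF2 a b c x - x * (x * hF2 a b c x) + c * hF1 a b c x - (a + b + 1) * (x * hF1 a b c x) - a * b * hyp2F1 a b c x)"
    unfolding zero .
  then have "x * hF2 a b c x - x * (x * hF2 a b c x) + c * hF1 a b c x - (a + b + 1) * (x * hF1 a b c x) - a * b * hyp2F1 a b c x = 0"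
    by (rule sums_unique2[OF _ sums_zero])
  then show ?thesis by (simp add: algebra_simps)
qed

end


context
  fixes a b c :: real
  assumes a: "a > 0" and b: "b > 0" and c: "c > 0"
begin

lemma ln_mid_lt: "p > 0 \<Longrightarrow> q > 0 \<Longrightarrow> r > 0 \<Longrightarrow> 2 * ln r < ln p + ln q \<Longrightarrow> r < sqrt (p * q)"
  for p q r :: real
proof -
  assume p: "p > 0" and q: "q > 0" and r: "r > 0" and l: "2 * ln r < ln p + ln q"
  have "ln (r\<^sup>2) < ln (p * q)" using p q r l by (simp add: ln_mult ln_realpow)
  hence "r\<^sup>2 < p * q" using p q r by simp
  thus ?thesis by (rule real_less_rsqrt)
qed

lemma ln_mid_gt: "p > 0 \<Longrightarrow> q > 0 \<Longrightarrow> r > 0 \<Longrightarrow> ln p + ln q < 2 * ln r \<Longrightarrow> sqrt (p * q) < r"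
  for p q r :: real
proof -
  assume p: "p > 0" and q: "q > 0" and r: "r > 0" and l: "ln p + ln q < 2 * ln r"
  have "ln (p * q) < ln (r\<^sup>2)" using p q r l by (simp add: ln_mult ln_realpow)
  hence "p * q < r\<^sup>2" using p q r by simp
  thus ?thesis using r by (intro real_less_lsqrt) auto
qed

lemma du:
  assumes "0 \<le> x" "x < 1"
  shows "((\<lambda>x. hF1 a b c x / hyp2F1 a b c x) has_real_derivative
     (hF2 a b c x * hyp2F1 a b c x - hF1 a b c x * hF1 a b c x) / (hyp2F1 a b c x * hyp2F1 a b c x)) (at x)"
proof -
  have x: "\<bar>x\<bar> < 1" using assms by simp
  show ?thesis
    by (rule DERIV_divide[OF dF1[OF a b c x] dF[OF a b c x]]) (use F_pos[OF a b c assms] in simp)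
qed

lemma part1:
  assumes cond: "a * b / (a + b + 1) < c"
  shows "convex_on {0<..<1} (\<lambda>x. ln (hyp2F1 a b c x)) \<and>
       (\<forall>x\<in>{0<..<1}. \<forall>y\<in>{0<..<1}.
          hyp2F1 a b c ((x + y) / 2) \<le> sqrt (hyp2F1 a b c x * hyp2F1 a b c y) \<and>
          (hyp2F1 a b c ((x + y) / 2) = sqrt (hyp2F1 a b c x * hyp2F1 a b c y) \<longleftrightarrow> x = y))"
proof -
  define F where "F = hyp2F1 a b c"
  define F1 where "F1 = hF1 a b c"
  define F2 where "F2 = hF2 a b c"
  define s where "s = a + b + 1"
  have s: "s > 0" using a b by (simp add: s_def)
  have cs: "a * b < c * s" using cond s by (simp add: s_def field_simps)
  define u where "u x = F1 x / F x" for x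
  define u' where "u' x = (F2 x * F x - F1 x * F1 x) / (F x * F x)" for x
  define g where "g x = a * b - (c - s * x) * u x - x * (1 - x) * (u x)\<^sup>2" for x
  define g' where "g' x = s * u x - (c - s * x) * u' x - ((1 - 2 * x) * (u x)\<^sup>2 + x * (1 - x) * (2 * u x * u' x))" for x
  have Fpos: "F x > 0" if "0 \<le> x" "x < 1" for x using F_pos[OF a b c that] by (simp add: F_def)
  have F1pos: "F1 x > 0" if "0 \<le> x" "x < 1" for x using F1_pos[OF a b c that] by (simp add: F1_def)
  have upos: "u x > 0" if "0 \<le> x" "x < 1" for x using Fpos[OF that] F1pos[OF that] by (simp add: u_def)
  have du: "(u has_real_derivative u' x) (at x)" if "0 \<le> x" "x < 1" for x
    using du[OF that] unfolding u_def[abs_def] u'_def F_def F1_def F2_def .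
  have dg: "(g has_real_derivative g' x) (at x)" if "0 \<le> x" "x < 1" for x
    unfolding g_def[abs_def] g'_def
    by (rule derivative_eq_intros du[OF that] refl | simp)+
  have ident: "x * (1 - x) * u' x = g x" if "0 \<le> x" "x < 1" for x
  proof -
    have o: "x * (1 - x) * F2 x = a * b * F x - (c - s * x) * F1 x"
      using ode[OF a b c, of x] that unfolding F_def F1_def F2_def s_def by (simp add: algebra_simps)
    have Fx: "F x \<noteq> 0" using Fpos[OF that] by simp
    have "x * (1 - x) * u' x = (x * (1 - x) * F2 x * F x - x * (1 - x) * F1 x * F1 x) / (F x * F x)"
      unfolding u'_def by (simp add: algebra_simps)
    also have "\<dots> = ((a * b * F x - (c - s * x) * F1 x) * F x - x * (1 - x) * F1 x * F1 x) / (F x * F x)"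
      unfolding o ..
    also have "\<dots> = g x"
      unfolding g_def u_def using Fx by (simp add: field_simps power2_eq_square)
    finally show ?thesis .
  qed
  have F0: "F 0 = 1" unfolding F_def by (rule F_0[OF a b c])
  have F10: "F1 0 = a * b / c" unfolding F1_def by (rule F1_0[OF a b c])
  have F20: "F2 0 = a * (a+1) * b * (b+1) / (c * (c+1))" unfolding F2_def by (rule F2_0[OF a b c])
  have g0: "g 0 = 0" unfolding g_def u_def F0 F10 using c by simp
  have g'0: "g' 0 = a * b * (c * s - a * b) / (c\<^sup>2 * (c + 1))"
  proof -
    define d where "d = c + 1"
    have c1: "d \<noteq> 0" "c \<noteq> 0" using c by (auto simp: d_def)
    have "g' 0 = s * (a * b / c) - c * (a * (a+1) * b * (b+1) / (c * d) - (a * b / c) * (a * b / c)) - (a * b / c)\<^sup>2"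
      unfolding g'_def u'_def u_def F0 F10 F20 d_def by simp
    also have "\<dots> = (s * a * b * c * d - c * c * a * (a+1) * b * (b+1) + c * d * a * a * b * b - d * a * a * b * b) / (c\<^sup>2 * d)"
      using c1 by (simp add: field_simps power2_eq_square)
    also have "\<dots> = a * b * (c * s - a * b) / (c\<^sup>2 * (c + 1))"
      unfolding d_def s_def by (simp add: algebra_simps)
    finally show ?thesis .
  qed
  have g'0pos: "g' 0 > 0" unfolding g'0 using a b c cs by (intro divide_pos_pos mult_pos_pos) auto
  have start: "\<exists>\<delta>>0. \<forall>y. 0 < y \<and> y < \<delta> \<longrightarrow> g y > 0"
  proof -
    obtain d where d: "d > 0" "\<forall>h>0. h < d \<longrightarrow> g 0 < g (0 + h)"
      using DERIV_pos_inc_right[OF dg[of 0] g'0pos] by auto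
    then show ?thesis using g0 by auto
  qed
  have cont: "continuous_on {0<..<1} g"
  proof (rule continuous_at_imp_continuous_on, intro ballI)
    fix x :: real assume "x \<in> {0<..<1}"
    then show "isCont g x" by (intro DERIV_isCont[OF dg]) auto
  qed
  have zero: "\<exists>l>0. (g has_real_derivative l) (at y)" if y: "0 < y" "y < 1" "g y = 0" for y
  proof -
    have "y * (1 - y) * u' y = 0" using ident[of y] y by simp
    hence u'0: "u' y = 0" using y by simp
    have uy: "u y > 0" using upos[of y] y by simp
    have "s - (1 - 2 * y) * u y > 0"
    proof (rule ccontr)
      assume "\<not> s - (1 - 2 * y) * u y > 0"
      hence h1: "(1 - 2 * y) * u y \<ge> s" by simp
      have "(1 - 2 * y) * u y \<le> u y" using y uy by (simp add: algebra_simps)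
      hence h2: "u y \<ge> s" using h1 by simp
      have "(1 - y) * u y = ((1 - 2 * y) * u y + u y) / 2" by (simp add: algebra_simps)
      hence h3: "(1 - y) * u y - s \<ge> 0" using h1 h2 by simp
      have h4: "y * u y * ((1 - y) * u y - s) \<ge> 0" using y uy h3 by simp
      have h5: "c * u y \<ge> c * s" using h2 c by simp
      have "a * b = c * u y + y * u y * ((1 - y) * u y - s)"
        using y(3) unfolding g_def by (simp add: algebra_simps power2_eq_square)
      thus False using h4 h5 cs by simp
    qed
    moreover have "g' y = u y * (s - (1 - 2 * y) * u y)"
      unfolding g'_def u'0 by (simp add: power2_eq_square algebra_simps)
    ultimately have "g' y > 0" using uy by simp
    thus ?thesis using dg[of y] y by auto
  qed
  have gpos: "g x > 0" if "0 < x" "x < 1" for x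
    by (rule first_zero[OF cont start zero that])
  have u'pos: "u' x > 0" if "x \<in> {0<..<1}" for x
  proof -
    have "x * (1 - x) * u' x > 0" using ident[of x] gpos[of x] that by simp
    moreover have "x * (1 - x) > 0" using that by simp
    ultimately show ?thesis by (simp add: zero_less_mult_iff)
  qed
  have dlnF: "((\<lambda>x. ln (F x)) has_real_derivative u x) (at x)" if "x \<in> {0<..<1}" for x
  proof -
    have "0 \<le> x" "x < 1" using that by auto
    then have "((\<lambda>x. ln (F x)) has_real_derivative 1 / F x * F1 x) (at x)"
      using dF[OF a b c, of x] Fpos[of x] unfolding F_def F1_def
      by (intro DERIV_chain2[OF DERIV_ln_divide]) auto
    then show ?thesis unfolding u_def by simp
  qed
  have pkg: "convex_on {0<..<1} (\<lambda>x. ln (F x)) \<and>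
      (\<forall>x\<in>{0<..<1}. \<forall>y\<in>{0<..<1}. x \<noteq> y \<longrightarrow> 2 * ln (F ((x + y) / 2)) < ln (F x) + ln (F y))"
    by (rule convex_pkg[OF _ dlnF du u'pos]) auto
  show ?thesis
  proof (rule conjI)
    show "convex_on {0<..<1} (\<lambda>x. ln (hyp2F1 a b c x))" using pkg unfolding F_def by simp
  next
    show "\<forall>x\<in>{0<..<1}. \<forall>y\<in>{0<..<1}.
          hyp2F1 a b c ((x + y) / 2) \<le> sqrt (hyp2F1 a b c x * hyp2F1 a b c y) \<and>
          (hyp2F1 a b c ((x + y) / 2) = sqrt (hyp2F1 a b c x * hyp2F1 a b c y) \<longleftrightarrow> x = y)"
    proof (intro ballI)
    fix x y :: real assume x: "x \<in> {0<..<1}" and y: "y \<in> {0<..<1}"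
    have m: "(x + y) / 2 \<in> {0<..<1}" using x y by auto
    have Fx: "F x > 0" "F y > 0" "F ((x + y) / 2) > 0" using Fpos x y m by auto
    show "hyp2F1 a b c ((x + y) / 2) \<le> sqrt (hyp2F1 a b c x * hyp2F1 a b c y) \<and>
        (hyp2F1 a b c ((x + y) / 2) = sqrt (hyp2F1 a b c x * hyp2F1 a b c y)) = (x = y)"
    proof (cases "x = y")
      case True
      then show ?thesis using Fx by (simp add: F_def)
    next
      case False
      then have "2 * ln (F ((x + y) / 2)) < ln (F x) + ln (F y)" using pkg x y by auto
      then have "F ((x + y) / 2) < sqrt (F x * F y)" using Fx by (intro ln_mid_lt) auto
      then show ?thesis using False unfolding F_def by simp
    qed
    qed
  qed
qed

end


lemma quad_case:
  fixes a b c y w :: real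
  assumes a: "a > 0" and b: "b > 0" and y: "0 < y" "y < 1" and w: "w > 0"
    and cond: "(a - c) * (b - c) > 0"
    and r: "y * w\<^sup>2 + (c - (a + b) * y) * w - a * b * (1 - y) = 0"
  shows "(w - a) * (w - b) > 0"
proof -
  have cases: "(c > a \<and> c > b) \<or> (c < a \<and> c < b)"
    using cond by (auto simp: zero_less_mult_iff)
  have gen1: "w < p" if p: "p > 0" "q > 0" "c > p" "c > q" "a * b = p * q" "a + b = p + q" for p q
  proof (rule ccontr)
    assume "\<not> w < p" hence wp: "w - p \<ge> 0" by simp
    have e: "y * w\<^sup>2 + (c - (a + b) * y) * w - a * b * (1 - y) = p * (c - q) + (w - p) * (y * w + c - q * y)"
      unfolding that(5,6) by (simp add: algebra_simps power2_eq_square)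
    have "q * y < q" using p y by simp
    hence "y * w + c - q * y > 0" using y w p by (smt (verit) mult_pos_pos)
    hence "(w - p) * (y * w + c - q * y) \<ge> 0" using wp by simp
    moreover have "p * (c - q) > 0" using p by simp
    ultimately show False using r e by simp
  qed
  have gen2: "w > p" if p: "p > 0" "q > 0" "c < p" "c < q" "a * b = p * q" "a + b = p + q" for p q
  proof (rule ccontr)
    assume "\<not> w > p" hence wp: "p - w \<ge> 0" by simp
    have e: "p * (y * w\<^sup>2 + (c - (a + b) * y) * w - a * b * (1 - y))
       = (p - w) * (- (p * q * (1 - y))) + w * (p * (c - q)) + p * y * w * (w - p)"
      unfolding that(5,6) by (simp add: algebra_simps power2_eq_square)
    have t1: "(p - w) * (- (p * q * (1 - y))) \<le> 0" using wp p y by (simp add: mult_nonneg_nonneg)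
    have t2: "w * (p * (c - q)) < 0" using w p by (simp add: mult_pos_neg)
    have t3: "p * y * w * (w - p) \<le> 0" using wp p y w by (simp add: mult_nonneg_nonpos)
    show False using e r t1 t2 t3 by simp
  qed
  from cases show ?thesis
  proof
    assume "c > a \<and> c > b"
    then have "w < a" "w < b" using gen1[of a b] gen1[of b a] a b by (auto simp: algebra_simps)
    then show ?thesis by (simp add: mult_neg_neg)
  next
    assume "c < a \<and> c < b"
    then have "w > a" "w > b" using gen2[of a b] gen2[of b a] a b by (auto simp: algebra_simps)
    then show ?thesis by simp
  qed
qed


context
  fixes a b c :: real
  assumes a: "a > 0" and b: "b > 0" and c: "c > 0"
begin

lemma part2:
  assumes cond: "(a - c) * (b - c) > 0"
  shows "concave_on {0<..} (\<lambda>t. ln (hyp2F1 a b c (1 - exp (- t)))) \<and>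
       (\<forall>x\<in>{0<..<1}. \<forall>y\<in>{0<..<1}.
          sqrt (hyp2F1 a b c x * hyp2F1 a b c y) \<le> hyp2F1 a b c (1 - sqrt ((1 - x) * (1 - y))) \<and>
          (sqrt (hyp2F1 a b c x * hyp2F1 a b c y) = hyp2F1 a b c (1 - sqrt ((1 - x) * (1 - y)))
             \<longleftrightarrow> x = y))"
proof -
  define F where "F = hyp2F1 a b c"
  define F1 where "F1 = hF1 a b c"
  define F2 where "F2 = hF2 a b c"
  define s where "s = a + b + 1"
  define u where "u x = F1 x / F x" for x
  define u' where "u' x = (F2 x * F x - F1 x * F1 x) / (F x * F x)" for x
  define g where "g x = a * b - (c - s * x) * u x - x * (1 - x) * (u x)\<^sup>2" for x
  have Fpos: "F x > 0" if "0 \<le> x" "x < 1" for x using F_pos[OF a b c that] by (simp add: F_def)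
  have F1pos: "F1 x > 0" if "0 \<le> x" "x < 1" for x using F1_pos[OF a b c that] by (simp add: F1_def)
  have upos: "u x > 0" if "0 \<le> x" "x < 1" for x using Fpos[OF that] F1pos[OF that] by (simp add: u_def)
  have du: "(u has_real_derivative u' x) (at x)" if "0 \<le> x" "x < 1" for x
    using du[OF a b c that] unfolding u_def[abs_def] u'_def F_def F1_def F2_def .
  have ident: "x * (1 - x) * u' x = g x" if "0 \<le> x" "x < 1" for x
  proof -
    have o: "x * (1 - x) * F2 x = a * b * F x - (c - s * x) * F1 x"
      using ode[OF a b c, of x] that unfolding F_def F1_def F2_def s_def by (simp add: algebra_simps)
    have Fx: "F x \<noteq> 0" using Fpos[OF that] by simp
    have "x * (1 - x) * u' x = (x * (1 - x) * F2 x * F x - x * (1 - x) * F1 x * F1 x) / (F x * F x)"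
      unfolding u'_def by (simp add: algebra_simps)
    also have "\<dots> = ((a * b * F x - (c - s * x) * F1 x) * F x - x * (1 - x) * F1 x * F1 x) / (F x * F x)"
      unfolding o ..
    also have "\<dots> = g x"
      unfolding g_def u_def using Fx by (simp add: field_simps power2_eq_square)
    finally show ?thesis .
  qed
  have F0: "F 0 = 1" unfolding F_def by (rule F_0[OF a b c])
  have F10: "F1 0 = a * b / c" unfolding F1_def by (rule F1_0[OF a b c])
  have F20: "F2 0 = a * (a+1) * b * (b+1) / (c * (c+1))" unfolding F2_def by (rule F2_0[OF a b c])
  define w where "w x = (1 - x) * u x" for x
  define w' where "w' x = - u x + (1 - x) * u' x" for x
  have dw: "(w has_real_derivative w' x) (at x)" if "0 \<le> x" "x < 1" for x
    unfolding w_def[abs_def] w'_def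
    by (rule derivative_eq_intros du[OF that] refl | simp)+
  define G where "G x = a * b * (1 - x) - (c - (a + b) * x) * w x - x * (w x)\<^sup>2" for x
  define G' where "G' x = - (a * b) + (a + b) * w x - (c - (a + b) * x) * w' x - ((w x)\<^sup>2 + x * (2 * w x * w' x))" for x
  have dG: "(G has_real_derivative G' x) (at x)" if "0 \<le> x" "x < 1" for x
    unfolding G_def[abs_def] G'_def
    by (rule derivative_eq_intros dw[OF that] refl | simp)+ (simp add: algebra_simps)?
  have identG: "x * (1 - x) * w' x = G x" if "0 \<le> x" "x < 1" for x
  proof -
    have "x * (1 - x) * w' x = - x * (1 - x) * u x + (1 - x) * (x * (1 - x) * u' x)"
      unfolding w'_def by (simp add: algebra_simps)
    also have "\<dots> = - x * (1 - x) * u x + (1 - x) * g x" unfolding ident[OF that] ..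
    also have "\<dots> = G x" unfolding G_def g_def w_def s_def by (simp add: algebra_simps power2_eq_square)
    finally show ?thesis .
  qed
  define \<phi> where "\<phi> x = - G x" for x
  have d\<phi>: "(\<phi> has_real_derivative - G' x) (at x)" if "0 \<le> x" "x < 1" for x
    unfolding \<phi>_def[abs_def] by (rule derivative_eq_intros dG[OF that] | simp)+
  have \<phi>0: "\<phi> 0 = 0" unfolding \<phi>_def G_def w_def u_def F0 F10 using c by simp
  have G'0: "- G' 0 = a * b * ((a - c) * (b - c)) / (c\<^sup>2 * (c + 1))"
  proof -
    define d where "d = c + 1"
    have c1: "d \<noteq> 0" "c \<noteq> 0" using c by (auto simp: d_def)
    have "- G' 0 = a * b - (a + b) * (a * b / c) + c * (- (a * b / c) + (a * (a+1) * b * (b+1) / (c * d) - (a * b / c) * (a * b / c))) + (a * b / c)\<^sup>2"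
      unfolding G'_def w'_def w_def u'_def u_def F0 F10 F20 d_def by (simp add: algebra_simps)
    also have "\<dots> = (- (a + b) * a * b * c * d + a * (a+1) * b * (b+1) * c * c - a * a * b * b * c * d + a * a * b * b * d) / (c\<^sup>2 * d)"
      using c1 by (simp add: field_simps power2_eq_square)
    also have "\<dots> = a * b * ((a - c) * (b - c)) / (c\<^sup>2 * (c + 1))"
      unfolding d_def by (simp add: algebra_simps)
    finally show ?thesis .
  qed
  have G'0pos: "- G' 0 > 0"
  proof -
    have "a * b * ((a - c) * (b - c)) > 0" using a b cond by simp
    moreover have "c\<^sup>2 * (c + 1) > 0" using c by simp
    ultimately show ?thesis unfolding G'0 by (rule divide_pos_pos)
  qed
  have start: "\<exists>\<delta>>0. \<forall>y. 0 < y \<and> y < \<delta> \<longrightarrow> \<phi> y > 0"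
  proof -
    obtain d where d: "d > 0" "\<forall>h>0. h < d \<longrightarrow> \<phi> 0 < \<phi> (0 + h)"
      using DERIV_pos_inc_right[OF d\<phi>[of 0] G'0pos] by auto
    then show ?thesis using \<phi>0 by auto
  qed
  have cont: "continuous_on {0<..<1} \<phi>"
  proof (rule continuous_at_imp_continuous_on, intro ballI)
    fix x :: real assume "x \<in> {0<..<1}"
    then show "isCont \<phi> x" by (intro DERIV_isCont[OF d\<phi>]) auto
  qed
  have zero: "\<exists>l>0. (\<phi> has_real_derivative l) (at y)" if y: "0 < y" "y < 1" "\<phi> y = 0" for y
  proof -
    have Gy: "G y = 0" using y(3) by (simp add: \<phi>_def)
    have "y * (1 - y) * w' y = 0" using identG[of y] y Gy by simp
    hence w'0: "w' y = 0" using y by simp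
    have wy: "w y > 0" using upos[of y] y by (simp add: w_def)
    have "(w y - a) * (w y - b) > 0"
      by (rule quad_case[OF a b y(1,2) wy cond]) (use Gy in \<open>simp add: G_def algebra_simps\<close>)
    moreover have "- G' y = (w y - a) * (w y - b)"
      unfolding G'_def w'0 by (simp add: power2_eq_square algebra_simps)
    ultimately have pos: "- G' y > 0" by simp
    have "(\<phi> has_real_derivative - G' y) (at y)" using d\<phi>[of y] y by simp
    with pos show ?thesis by blast
  qed
  have \<phi>pos: "\<phi> x > 0" if "0 < x" "x < 1" for x
    by (rule first_zero[OF cont start zero that])
  have w'neg: "w' x < 0" if "0 < x" "x < 1" for x
  proof -
    have "x * (1 - x) * w' x < 0" using identG[of x] \<phi>pos[of x] that by (simp add: \<phi>_def)
    moreover have "x * (1 - x) > 0" using that by simp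
    ultimately show ?thesis using that by (simp add: mult_less_0_iff)
  qed
  have dx: "((\<lambda>t. 1 - exp (- t)) has_real_derivative exp (- t)) (at t)" for t :: real
    by (rule derivative_eq_intros refl | simp)+
  have xr: "0 \<le> 1 - exp (- t)" "1 - exp (- t) < 1" if "t \<in> {0<..}" for t :: real
    using that by auto
  define f where "f t = - ln (F (1 - exp (- t)))" for t
  define f' where "f' t = - w (1 - exp (- t))" for t
  define f'' where "f'' t = - (w' (1 - exp (- t)) * exp (- t))" for t
  have df: "(f has_real_derivative f' t) (at t)" if "t \<in> {0<..}" for t
  proof -
    define x where "x = 1 - exp (- t)"
    have x: "0 \<le> x" "x < 1" using xr[OF that] by (auto simp: x_def)
    have dFx: "(F has_real_derivative F1 x) (at x)" using dF[OF a b c, of x] x unfolding F_def F1_def by simp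
    have "((\<lambda>t. F (1 - exp (- t))) has_real_derivative F1 x * exp (- t)) (at t)"
      using DERIV_chain2[OF dFx[unfolded x_def] dx[of t]] unfolding x_def .
    from DERIV_chain2[OF DERIV_ln_divide[OF Fpos[OF x], unfolded x_def] this]
    have "((\<lambda>t. ln (F (1 - exp (- t)))) has_real_derivative 1 / F x * (F1 x * exp (- t))) (at t)"
      unfolding x_def .
    from DERIV_minus[OF this]
    have "(f has_real_derivative - (1 / F x * (F1 x * exp (- t)))) (at t)" unfolding f_def[abs_def] .
    moreover have "- (1 / F x * (F1 x * exp (- t))) = f' t"
      unfolding f'_def w_def u_def x_def[symmetric] by (simp add: x_def)
    ultimately show ?thesis by simp
  qed
  have df': "(f' has_real_derivative f'' t) (at t)" if "t \<in> {0<..}" for t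
  proof -
    have "((\<lambda>t. w (1 - exp (- t))) has_real_derivative w' (1 - exp (- t)) * exp (- t)) (at t)"
      by (rule DERIV_chain2[OF dw[OF xr[OF that]] dx])
    from DERIV_minus[OF this] show ?thesis unfolding f'_def[abs_def] f''_def .
  qed
  have f''pos: "f'' t > 0" if "t \<in> {0<..}" for t
  proof -
    have "w' (1 - exp (- t)) < 0" using that by (intro w'neg) auto
    then show ?thesis unfolding f''_def by (simp add: mult_neg_pos)
  qed
  have pkg: "convex_on {0<..} f \<and> (\<forall>x\<in>{0<..}. \<forall>y\<in>{0<..}. x \<noteq> y \<longrightarrow> 2 * f ((x + y) / 2) < f x + f y)"
    by (rule convex_pkg[OF _ df df' f''pos]) auto
  show ?thesis
  proof (rule conjI)
    show "concave_on {0<..} (\<lambda>t. ln (hyp2F1 a b c (1 - exp (- t))))"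
      using pkg unfolding concave_on_def f_def F_def by simp
  next
    show "\<forall>x\<in>{0<..<1}. \<forall>y\<in>{0<..<1}.
          sqrt (hyp2F1 a b c x * hyp2F1 a b c y) \<le> hyp2F1 a b c (1 - sqrt ((1 - x) * (1 - y))) \<and>
          (sqrt (hyp2F1 a b c x * hyp2F1 a b c y) = hyp2F1 a b c (1 - sqrt ((1 - x) * (1 - y)))
             \<longleftrightarrow> x = y)"
    proof (intro ballI)
      fix x y :: real assume x: "x \<in> {0<..<1}" and y: "y \<in> {0<..<1}"
      define tx where "tx = - ln (1 - x)"
      define ty where "ty = - ln (1 - y)"
      have tx: "tx > 0" "1 - exp (- tx) = x" using x by (auto simp: tx_def)
      have ty: "ty > 0" "1 - exp (- ty) = y" using y by (auto simp: ty_def)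
      have sq: "exp (- ((tx + ty) / 2)) = sqrt ((1 - x) * (1 - y))"
      proof -
        have e: "exp (- tx) = 1 - x" "exp (- ty) = 1 - y" using tx ty by linarith+
        have "(exp (- ((tx + ty) / 2)))\<^sup>2 = exp (- tx) * exp (- ty)"
          by (simp add: power2_eq_square exp_add[symmetric])
        also have "\<dots> = (1 - x) * (1 - y)" unfolding e ..
        finally show ?thesis by (intro real_sqrt_unique[symmetric]) auto
      qed
      define z where "z = 1 - sqrt ((1 - x) * (1 - y))"
      have zz: "z = 1 - exp (- ((tx + ty) / 2))" unfolding z_def sq ..
      have z: "0 \<le> z" "z < 1" unfolding zz using tx ty by auto
      have Fx: "F x > 0" "F y > 0" "F z > 0" using Fpos x y z by auto
      show "sqrt (hyp2F1 a b c x * hyp2F1 a b c y) \<le> hyp2F1 a b c (1 - sqrt ((1 - x) * (1 - y))) \<and>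
          (sqrt (hyp2F1 a b c x * hyp2F1 a b c y) = hyp2F1 a b c (1 - sqrt ((1 - x) * (1 - y)))
             \<longleftrightarrow> x = y)"
      proof (cases "x = y")
        case True
        have "sqrt ((1 - x) * (1 - x)) = 1 - x" using x by simp
        then show ?thesis using True Fx by (simp add: F_def)
      next
        case False
        have "tx \<noteq> ty" using False tx ty by auto
        then have "2 * f ((tx + ty) / 2) < f tx + f ty" using pkg tx ty by auto
        then have "ln (F x) + ln (F y) < 2 * ln (F z)" unfolding f_def tx(2) ty(2) zz[symmetric] by simp
        then have "sqrt (F x * F y) < F z" using Fx by (intro ln_mid_gt) auto
        then show ?thesis using False unfolding F_def z_def by simp
      qed
    qed
  qed
qed

end



context
  fixes a b c :: real
  assumes a: "a > 0" and b: "b > 0" and c: "c > 0"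
begin

lemma part3:
  assumes cond: "a + b \<ge> c"
  shows "convex_on {0<..} (\<lambda>t. hyp2F1 a b c (1 - exp (- t))) \<and>
       (\<forall>x\<in>{0<..<1}. \<forall>y\<in>{0<..<1}.
          hyp2F1 a b c (1 - sqrt ((1 - x) * (1 - y))) \<le> (hyp2F1 a b c x + hyp2F1 a b c y) / 2 \<and>
          (hyp2F1 a b c (1 - sqrt ((1 - x) * (1 - y))) = (hyp2F1 a b c x + hyp2F1 a b c y) / 2
             \<longleftrightarrow> x = y))"
proof -
  define F where "F = hyp2F1 a b c"
  define F1 where "F1 = hF1 a b c"
  define F2 where "F2 = hF2 a b c"
  have Fpos: "F x > 0" if "0 \<le> x" "x < 1" for x using F_pos[OF a b c that] by (simp add: F_def)
  have F1pos: "F1 x > 0" if "0 \<le> x" "x < 1" for x using F1_pos[OF a b c that] by (simp add: F1_def)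
  have dF': "(F has_real_derivative F1 x) (at x)" if "0 \<le> x" "x < 1" for x
    using dF[OF a b c, of x] that unfolding F_def F1_def by simp
  have dF1': "(F1 has_real_derivative F2 x) (at x)" if "0 \<le> x" "x < 1" for x
    using dF1[OF a b c, of x] that unfolding F2_def F1_def by simp
  have F0: "F 0 = 1" unfolding F_def by (rule F_0[OF a b c])
  have F10: "F1 0 = a * b / c" unfolding F1_def by (rule F1_0[OF a b c])
  have F20: "F2 0 = a * (a+1) * b * (b+1) / (c * (c+1))" unfolding F2_def by (rule F2_0[OF a b c])
  define H where "H x = a * b * F x - (c - (a + b) * x) * F1 x" for x
  define H' where "H' x = a * b * F1 x + (a + b) * F1 x - (c - (a + b) * x) * F2 x" for x
  have dH: "(H has_real_derivative H' x) (at x)" if "0 \<le> x" "x < 1" for x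
    unfolding H_def[abs_def] H'_def
    by (rule derivative_eq_intros dF'[OF that] dF1'[OF that] refl | simp)+ (simp add: algebra_simps)?
  have ident: "x * ((1 - x) * F2 x - F1 x) = H x" if "0 \<le> x" "x < 1" for x
  proof -
    have o: "x * (1 - x) * F2 x = a * b * F x - (c - (a + b + 1) * x) * F1 x"
      using ode[OF a b c, of x] that unfolding F_def F1_def F2_def by (simp add: algebra_simps)
    have "x * ((1 - x) * F2 x - F1 x) = x * (1 - x) * F2 x - x * F1 x" by (simp add: algebra_simps)
    also have "\<dots> = H x" unfolding o H_def by (simp add: algebra_simps)
    finally show ?thesis .
  qed
  have H0: "H 0 = 0" unfolding H_def F0 F10 using c by simp
  have H'0: "H' 0 = a * b * (a * b + a + b - c) / (c * (c + 1))"
  proof -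
    define d where "d = c + 1"
    have c1: "d \<noteq> 0" "c \<noteq> 0" using c by (auto simp: d_def)
    have "H' 0 = a * b * (a * b / c) + (a + b) * (a * b / c) - c * (a * (a+1) * b * (b+1) / (c * d))"
      unfolding H'_def F10 F20 d_def by simp
    also have "\<dots> = (a * b * a * b * d + (a + b) * a * b * d - c * a * (a+1) * b * (b+1)) / (c * d)"
      using c1 by (simp add: field_simps)
    also have "\<dots> = a * b * (a * b + a + b - c) / (c * (c + 1))"
      unfolding d_def by (simp add: algebra_simps)
    finally show ?thesis .
  qed
  have H'0pos: "H' 0 > 0"
  proof -
    have ab: "a * b > 0" using a b by simp
    hence "a * b + a + b - c > 0" using cond by simp
    hence "a * b * (a * b + a + b - c) > 0" using ab by simp
    moreover have "c * (c + 1) > 0" using c by simp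
    ultimately show ?thesis unfolding H'0 by (rule divide_pos_pos)
  qed
  have start: "\<exists>\<delta>>0. \<forall>y. 0 < y \<and> y < \<delta> \<longrightarrow> H y > 0"
  proof -
    obtain d where d: "d > 0" "\<forall>h>0. h < d \<longrightarrow> H 0 < H (0 + h)"
      using DERIV_pos_inc_right[OF dH[of 0] H'0pos] by auto
    then show ?thesis using H0 by auto
  qed
  have cont: "continuous_on {0<..<1} H"
  proof (rule continuous_at_imp_continuous_on, intro ballI)
    fix x :: real assume "x \<in> {0<..<1}"
    then show "isCont H x" by (intro DERIV_isCont[OF dH]) auto
  qed
  have zero: "\<exists>l>0. (H has_real_derivative l) (at y)" if y: "0 < y" "y < 1" "H y = 0" for y
  proof -
    have "y * ((1 - y) * F2 y - F1 y) = 0" using ident[of y] y by simp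
    hence e: "(1 - y) * F2 y = F1 y" using y by simp
    have F1y: "F1 y > 0" using F1pos[of y] y by simp
    have "(1 - y) * H' y = (1 - y) * (a * b + a + b) * F1 y - (c - (a + b) * y) * ((1 - y) * F2 y)"
      unfolding H'_def by (simp add: algebra_simps)
    also have "\<dots> = F1 y * (a * b * (1 - y) + (a + b - c))" unfolding e by (simp add: algebra_simps)
    finally have eq: "(1 - y) * H' y = F1 y * (a * b * (1 - y) + (a + b - c))" .
    have "a * b * (1 - y) > 0" using a b y by simp
    hence "F1 y * (a * b * (1 - y) + (a + b - c)) > 0" using F1y cond by simp
    hence "(1 - y) * H' y > 0" unfolding eq .
    hence pos: "H' y > 0" using y by (simp add: zero_less_mult_iff)
    have "(H has_real_derivative H' y) (at y)" using dH[of y] y by simp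
    with pos show ?thesis by blast
  qed
  have Hpos: "H x > 0" if "0 < x" "x < 1" for x
    by (rule first_zero[OF cont start zero that])
  have z'pos: "(1 - x) * F2 x - F1 x > 0" if "0 < x" "x < 1" for x
  proof -
    have "x * ((1 - x) * F2 x - F1 x) > 0" using ident[of x] Hpos[of x] that by simp
    thus ?thesis using that by (simp add: zero_less_mult_iff)
  qed
  have dx: "((\<lambda>t. 1 - exp (- t)) has_real_derivative exp (- t)) (at t)" for t :: real
    by (rule derivative_eq_intros refl | simp)+
  have dexp: "((\<lambda>t. exp (- t)) has_real_derivative - exp (- t)) (at t)" for t :: real
    by (rule derivative_eq_intros refl | simp)+
  have xr: "0 \<le> 1 - exp (- t)" "1 - exp (- t) < 1" if "t \<in> {0<..}" for t :: real
    using that by auto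
  define f where "f t = F (1 - exp (- t))" for t
  define f' where "f' t = F1 (1 - exp (- t)) * exp (- t)" for t
  define f'' where "f'' t = F2 (1 - exp (- t)) * exp (- t) * exp (- t) + - exp (- t) * F1 (1 - exp (- t))" for t
  have df: "(f has_real_derivative f' t) (at t)" if "t \<in> {0<..}" for t
    unfolding f_def[abs_def] f'_def by (rule DERIV_chain2[OF dF'[OF xr[OF that]] dx])
  have df': "(f' has_real_derivative f'' t) (at t)" if "t \<in> {0<..}" for t
    unfolding f'_def[abs_def] f''_def by (rule DERIV_mult[OF DERIV_chain2[OF dF1'[OF xr[OF that]] dx] dexp])
  have f''pos: "f'' t > 0" if "t \<in> {0<..}" for t
  proof -
    define x where "x = 1 - exp (- t)"
    have x: "0 < x" "x < 1" using that by (auto simp: x_def)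
    have ex: "exp (- t) = 1 - x" by (simp add: x_def)
    have "f'' t = exp (- t) * ((1 - x) * F2 x - F1 x)"
      unfolding f''_def x_def[symmetric] ex by (simp add: algebra_simps)
    moreover have "(1 - x) * F2 x - F1 x > 0" by (rule z'pos[OF x])
    ultimately show ?thesis by simp
  qed
  have pkg: "convex_on {0<..} f \<and> (\<forall>x\<in>{0<..}. \<forall>y\<in>{0<..}. x \<noteq> y \<longrightarrow> 2 * f ((x + y) / 2) < f x + f y)"
    by (rule convex_pkg[OF _ df df' f''pos]) auto
  show ?thesis
  proof (rule conjI)
    show "convex_on {0<..} (\<lambda>t. hyp2F1 a b c (1 - exp (- t)))"
      using pkg unfolding f_def F_def by simp
  next
    show "\<forall>x\<in>{0<..<1}. \<forall>y\<in>{0<..<1}.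
          hyp2F1 a b c (1 - sqrt ((1 - x) * (1 - y))) \<le> (hyp2F1 a b c x + hyp2F1 a b c y) / 2 \<and>
          (hyp2F1 a b c (1 - sqrt ((1 - x) * (1 - y))) = (hyp2F1 a b c x + hyp2F1 a b c y) / 2
             \<longleftrightarrow> x = y)"
    proof (intro ballI)
      fix x y :: real assume x: "x \<in> {0<..<1}" and y: "y \<in> {0<..<1}"
      define tx where "tx = - ln (1 - x)"
      define ty where "ty = - ln (1 - y)"
      have tx: "tx > 0" "1 - exp (- tx) = x" using x by (auto simp: tx_def)
      have ty: "ty > 0" "1 - exp (- ty) = y" using y by (auto simp: ty_def)
      have sq: "exp (- ((tx + ty) / 2)) = sqrt ((1 - x) * (1 - y))"
      proof -
        have e: "exp (- tx) = 1 - x" "exp (- ty) = 1 - y" using tx ty by linarith+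
        have "(exp (- ((tx + ty) / 2)))\<^sup>2 = exp (- tx) * exp (- ty)"
          by (simp add: power2_eq_square exp_add[symmetric])
        also have "\<dots> = (1 - x) * (1 - y)" unfolding e ..
        finally show ?thesis by (intro real_sqrt_unique[symmetric]) auto
      qed
      define z where "z = 1 - sqrt ((1 - x) * (1 - y))"
      have zz: "z = 1 - exp (- ((tx + ty) / 2))" unfolding z_def sq ..
      show "hyp2F1 a b c (1 - sqrt ((1 - x) * (1 - y))) \<le> (hyp2F1 a b c x + hyp2F1 a b c y) / 2 \<and>
          (hyp2F1 a b c (1 - sqrt ((1 - x) * (1 - y))) = (hyp2F1 a b c x + hyp2F1 a b c y) / 2
             \<longleftrightarrow> x = y)"
      proof (cases "x = y")
        case True
        have "sqrt ((1 - x) * (1 - x)) = 1 - x" using x by simp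
        then show ?thesis using True by simp
      next
        case False
        have "tx \<noteq> ty" using False tx ty by auto
        then have "2 * f ((tx + ty) / 2) < f tx + f ty" using pkg tx ty by auto
        then have "2 * F z < F x + F y" unfolding f_def tx(2) ty(2) zz[symmetric] .
        then show ?thesis using False unfolding F_def z_def by simp
      qed
    qed
  qed
qed

end

theorem theorem1p3:
  fixes a b c :: real
  assumes "a > 0" and "b > 0" and "c > 0"
  shows
   "(a * b / (a + b + 1) < c \<longrightarrow>
       convex_on {0<..<1} (\<lambda>x. ln (hyp2F1 a b c x)) \<and>
       (\<forall>x\<in>{0<..<1}. \<forall>y\<in>{0<..<1}.
          hyp2F1 a b c ((x + y) / 2) \<le> sqrt (hyp2F1 a b c x * hyp2F1 a b c y) \<and>
          (hyp2F1 a b c ((x + y) / 2) = sqrt (hyp2F1 a b c x * hyp2F1 a b c y) \<longleftrightarrow> x = y)))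
  \<and> ((a - c) * (b - c) > 0 \<longrightarrow>
       concave_on {0<..} (\<lambda>t. ln (hyp2F1 a b c (1 - exp (- t)))) \<and>
       (\<forall>x\<in>{0<..<1}. \<forall>y\<in>{0<..<1}.
          sqrt (hyp2F1 a b c x * hyp2F1 a b c y) \<le> hyp2F1 a b c (1 - sqrt ((1 - x) * (1 - y))) \<and>
          (sqrt (hyp2F1 a b c x * hyp2F1 a b c y) = hyp2F1 a b c (1 - sqrt ((1 - x) * (1 - y)))
             \<longleftrightarrow> x = y)))
  \<and> (a + b \<ge> c \<longrightarrow>
       convex_on {0<..} (\<lambda>t. hyp2F1 a b c (1 - exp (- t))) \<and>
       (\<forall>x\<in>{0<..<1}. \<forall>y\<in>{0<..<1}.
          hyp2F1 a b c (1 - sqrt ((1 - x) * (1 - y))) \<le> (hyp2F1 a b c x + hyp2F1 a b c y) / 2 \<and>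
          (hyp2F1 a b c (1 - sqrt ((1 - x) * (1 - y))) = (hyp2F1 a b c x + hyp2F1 a b c y) / 2
             \<longleftrightarrow> x = y)))"
  proof -
  have h1: "a * b / (a + b + 1) < c \<longrightarrow>
       convex_on {0<..<1} (\<lambda>x. ln (hyp2F1 a b c x)) \<and>
       (\<forall>x\<in>{0<..<1}. \<forall>y\<in>{0<..<1}.
          hyp2F1 a b c ((x + y) / 2) \<le> sqrt (hyp2F1 a b c x * hyp2F1 a b c y) \<and>
          (hyp2F1 a b c ((x + y) / 2) = sqrt (hyp2F1 a b c x * hyp2F1 a b c y) \<longleftrightarrow> x = y))"
    by (rule impI, rule part1[OF assms])
  have h2: "(a - c) * (b - c) > 0 \<longrightarrow>
       concave_on {0<..} (\<lambda>t. ln (hyp2F1 a b c (1 - exp (- t)))) \<and>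
       (\<forall>x\<in>{0<..<1}. \<forall>y\<in>{0<..<1}.
          sqrt (hyp2F1 a b c x * hyp2F1 a b c y) \<le> hyp2F1 a b c (1 - sqrt ((1 - x) * (1 - y))) \<and>
          (sqrt (hyp2F1 a b c x * hyp2F1 a b c y) = hyp2F1 a b c (1 - sqrt ((1 - x) * (1 - y)))
             \<longleftrightarrow> x = y))"
    by (rule impI, rule part2[OF assms])
  have h3: "a + b \<ge> c \<longrightarrow>
       convex_on {0<..} (\<lambda>t. hyp2F1 a b c (1 - exp (- t))) \<and>
       (\<forall>x\<in>{0<..<1}. \<forall>y\<in>{0<..<1}.
          hyp2F1 a b c (1 - sqrt ((1 - x) * (1 - y))) \<le> (hyp2F1 a b c x + hyp2F1 a b c y) / 2 \<and>
          (hyp2F1 a b c (1 - sqrt ((1 - x) * (1 - y))) = (hyp2F1 a b c x + hyp2F1 a b c y) / 2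
             \<longleftrightarrow> x = y))"
    by (rule impI, rule part3[OF assms])
  show ?thesis by (rule conjI[OF h1 conjI[OF h2 h3]])
qed

end
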